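(* Let $H$ be the adjacency matrix or the Laplacian matrix of an undirected weighted connected graph on vertices $1,\dots,n$, and suppose perfect state transfer from vertex $1$ to vertex $2$ occurs at time $t_0$, i.e. $|\langle 1|e^{it_0H}|2\rangle|=1$. Assume moreover that there exist $\theta\in\mathbb{R}$, an integer $0\le\ell\le n$, a real orthogonal matrix $\tilde Q$ and $\tilde D=\pi\,\mathrm{diag}(r_1,\dots,r_n)$ with $r_1\ge\cdots\ge r_\ell$ positive even integers and $r_{\ell+1}\ge\cdots\ge r_n$ positive odd integers, such that $t_0H=\tilde Q^T\tilde D\tilde Q+\theta I$ and the first two rows of $\tilde Q^T$ are $(x_1,\dots,x_n)$ and $(x_1,\dots,x_\ell,-x_{\ell+1},\dots,-x_n)$ with $x_1,\dots,x_n\ge 0$ (that is, such a decomposition exists with no trailing zero block). Let $H_0$ be a nonzero real symmetric $n\times n$ perturbation and $\hat H=t_0H+H_0$. Then, as $H_0\to 0$, \[ 1-|\langle 1|e^{i\hat H}|2\rangle|^2\ \le\ \frac{2\|H_0\|_F^2}{(\pi-\|H_0\|)^2}+\|H_0\|^2+O(\|H_0\|^3). \]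
   Context: $\|\cdot\|$ denotes the operator (spectral) norm and $\|\cdot\|_F$ the Frobenius norm. For a weighted graph with edge weights $w(j,k)$, the adjacency matrix $A$ has $(j,k)$ entry $w(j,k)$ if $j,k$ are adjacent and $0$ otherwise; the Laplacian is $L=R-A$ with $R$ the diagonal matrix of row sums of $A$. $\langle 1|M|2\rangle$ denotes the $(1,2)$ entry of a matrix $M$. *)

theory Defs
  imports "HOL-Analysis.Analysis"
begin

definition weighted_connected_graph :: "('n::finite \<Rightarrow> 'n \<Rightarrow> real) \<Rightarrow> bool" where
  "weighted_connected_graph w \<longleftrightarrow>
     (\<forall>j k. w j k = w k j) \<and> (\<forall>j k. w j k \<ge> 0) \<and> (\<forall>j. w j j = 0) \<and>
     (\<forall>j k. (j, k) \<in> {(p, q). w p q > 0}\<^sup>*)"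

definition adjacency_matrix :: "('n::finite \<Rightarrow> 'n \<Rightarrow> real) \<Rightarrow> real^'n^'n" where
  "adjacency_matrix w = (\<chi> j k. w j k)"

definition laplacian_matrix :: "('n::finite \<Rightarrow> 'n \<Rightarrow> real) \<Rightarrow> real^'n^'n" where
  "laplacian_matrix w =
     (\<chi> j k. (if j = k then (\<Sum>m\<in>UNIV. adjacency_matrix w $ j $ m) else 0) - adjacency_matrix w $ j $ k)"

fun cmat_pow :: "complex^'n^'n \<Rightarrow> nat \<Rightarrow> complex^'n^'n" where
  "cmat_pow A 0 = mat 1"
| "cmat_pow A (Suc k) = A ** cmat_pow A k"

definition cmat_exp :: "complex^'n^'n \<Rightarrow> complex^'n^'n" where
  "cmat_exp A = (\<Sum>k. (\<chi> i j. (1 / (of_nat (fact k) :: complex)) * (cmat_pow A k $ i $ j)))"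

definition i_times :: "real^'n^'n \<Rightarrow> complex^'n^'n" where
  "i_times M = (\<chi> j k. \<i> * complex_of_real (M $ j $ k))"

definition op_norm :: "real^'n^'n \<Rightarrow> real" where
  "op_norm M = onorm (\<lambda>x. M *v x)"

definition frob_norm :: "real^'n^'n \<Rightarrow> real" where
  "frob_norm M = sqrt (\<Sum>j\<in>UNIV. \<Sum>k\<in>UNIV. (M $ j $ k)\<^sup>2)"

end

theory Submission imports Defs begin

typedef (overloaded) ('a::finite) cm = "UNIV :: ((complex^'a) \<Rightarrow>\<^sub>L (complex^'a)) set"
  morphisms cm_rep cm_abs by auto

setup_lifting type_definition_cm

instantiation cm :: (finite) real_normed_vector
begin
lift_definition norm_cm :: "'a cm \<Rightarrow> real" is norm .
lift_definition minus_cm :: "'a cm \<Rightarrow> 'a cm \<Rightarrow> 'a cm" is "(-)" .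
lift_definition plus_cm :: "'a cm \<Rightarrow> 'a cm \<Rightarrow> 'a cm" is "(+)" .
lift_definition uminus_cm :: "'a cm \<Rightarrow> 'a cm" is "uminus" .
lift_definition zero_cm :: "'a cm" is "0" .
lift_definition scaleR_cm :: "real \<Rightarrow> 'a cm \<Rightarrow> 'a cm" is "scaleR" .
definition dist_cm :: "'a cm \<Rightarrow> 'a cm \<Rightarrow> real" where "dist_cm a b = norm (a - b)"
definition uniformity_cm :: "('a cm \<times> 'a cm) filter" where
  "uniformity_cm = (INF e\<in>{0 <..}. principal {(x, y). dist x y < e})"
definition open_cm :: "'a cm set \<Rightarrow> bool" where
  "open_cm S = (\<forall>x\<in>S. \<forall>\<^sub>F (x', y) in uniformity. x' = x \<longrightarrow> y \<in> S)"
definition sgn_cm :: "'a cm \<Rightarrow> 'a cm" where "sgn_cm x = scaleR (inverse (norm x)) x"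
instance
  apply standard
  unfolding dist_cm_def open_cm_def sgn_cm_def uniformity_cm_def
  apply (rule refl | (transfer, force simp: norm_triangle_ineq algebra_simps scaleR_add_right scaleR_add_left))+
  done
end

instantiation cm :: (finite) real_normed_algebra_1
begin
lift_definition one_cm :: "'a cm" is "id_blinfun" .
lift_definition times_cm :: "'a cm \<Rightarrow> 'a cm \<Rightarrow> 'a cm" is "(o\<^sub>L)" .
instance
proof
  fix a b c :: "'a cm" and r :: real
  show "a * b * c = a * (b * c)" by transfer (auto intro!: blinfun_eqI)
  show "(a + b) * c = a * c + b * c" by transfer (auto intro!: blinfun_eqI simp: blinfun.bilinear_simps)
  show "a * (b + c) = a * b + a * c" by transfer (auto intro!: blinfun_eqI simp: blinfun.bilinear_simps)
  show "1 * a = a" by transfer (auto intro!: blinfun_eqI)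
  show "a * 1 = a" by transfer (auto intro!: blinfun_eqI)
  show "r *\<^sub>R a * b = r *\<^sub>R (a * b)" by transfer (auto intro!: blinfun_eqI simp: blinfun.bilinear_simps)
  show "a * r *\<^sub>R b = r *\<^sub>R (a * b)" by transfer (auto intro!: blinfun_eqI simp: blinfun.bilinear_simps)
  show "norm (a * b) \<le> norm a * norm b" by transfer (rule norm_blinfun_compose)
  have ne: "(axis undefined 1 :: complex^'a) \<noteq> 0" by (simp add: axis_eq_0_iff)
  show "(0::'a cm) \<noteq> 1"
  proof
    assume "(0::'a cm) = 1"
    then have "(0 :: (complex^'a) \<Rightarrow>\<^sub>L (complex^'a)) = id_blinfun" by transfer
    then have "blinfun_apply (0 :: (complex^'a) \<Rightarrow>\<^sub>L (complex^'a)) (axis undefined 1) = axis undefined 1"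
      by (metis blinfun_apply_id_blinfun)
    with ne show False by simp
  qed
  show "norm (1::'a cm) = 1"
  proof transfer
    show "norm (id_blinfun :: (complex^'a) \<Rightarrow>\<^sub>L (complex^'a)) = 1"
      by (rule norm_blinfun_eqI[where x="axis undefined 1"]) (use ne in auto)
  qed
qed
end

instance cm :: (finite) banach
proof
  fix X :: "nat \<Rightarrow> 'a cm"
  assume "Cauchy X"
  then have "Cauchy (\<lambda>n. cm_rep (X n))"
    unfolding Cauchy_def dist_norm dist_cm_def by (simp add: norm_cm.rep_eq minus_cm.rep_eq)
  then obtain L where L: "(\<lambda>n. cm_rep (X n)) \<longlonglongrightarrow> L"
    using Cauchy_convergent_iff convergent_def by blast
  have "X \<longlonglongrightarrow> cm_abs L"
    using L unfolding LIMSEQ_def dist_norm dist_cm_def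
    by (simp add: norm_cm.rep_eq minus_cm.rep_eq cm_abs_inverse)
  then show "convergent X" by (auto simp: convergent_def)
qed


lemma bl_cm_rep: "bounded_linear (cm_rep :: 'a::finite cm \<Rightarrow> _)"
  by (rule bounded_linear_intro[where K=1])
     (simp_all add: plus_cm.rep_eq scaleR_cm.rep_eq norm_cm.rep_eq)

lemma linear_mv: "linear (\<lambda>v::complex^'a::finite. M *v v)"
  by (rule linearI)
     (auto simp: vec_eq_iff matrix_vector_mult_def sum_distrib_left scaleR_conv_of_real[where 'a=complex]
       algebra_simps sum.distrib)

lemma bl_mv: "bounded_linear (\<lambda>v::complex^'a::finite. M *v v)"
  using linear_mv linear_conv_bounded_linear by blast

lemma mv_axis: "((M::'b::semiring_1^'a::finite^'c) *v axis j 1) $ i = M $ i $ j"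
proof -
  have "((M::'b::semiring_1^'a::finite^'c) *v axis j 1) $ i = (\<Sum>k\<in>UNIV. M $ i $ k * (if k = j then 1 else 0))"
    unfolding matrix_vector_mult_def axis_def by (simp add: vec_lambda_beta)
  also have "\<dots> = (\<Sum>k\<in>UNIV. if k = j then M $ i $ j else 0)"
    by (rule sum.cong) auto
  also have "\<dots> = M $ i $ j" by simp
  finally show ?thesis .
qed

definition Phi :: "complex^'a^'a \<Rightarrow> 'a::finite cm" where
  "Phi M = cm_abs (Blinfun (\<lambda>v. M *v v))"

lemma Phi_apply: "blinfun_apply (cm_rep (Phi M)) v = M *v v"
  unfolding Phi_def by (simp add: cm_abs_inverse bounded_linear_Blinfun_apply[OF bl_mv])

lemma cm_eqI: "(\<And>v. blinfun_apply (cm_rep x) v = blinfun_apply (cm_rep y) v) \<Longrightarrow> x = y"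
  by (metis blinfun_eqI cm_rep_inject)

lemma Phi_mult: "Phi (A ** B) = Phi A * Phi B"
  by (rule cm_eqI) (simp add: Phi_apply times_cm.rep_eq matrix_vector_mul_assoc)

lemma Phi_one: "Phi (mat 1) = 1"
  by (rule cm_eqI) (simp add: Phi_apply one_cm.rep_eq)

lemma Phi_add: "Phi (A + B) = Phi A + Phi B"
  by (rule cm_eqI) (simp add: Phi_apply plus_cm.rep_eq plus_blinfun.rep_eq matrix_vector_mult_add_rdistrib)

lemma Phi_pow: "Phi (cmat_pow M k) = Phi M ^ k"
  by (induction k) (simp_all add: Phi_one Phi_mult)

lemma i_times_add: "i_times (A + B) = i_times A + i_times B"
  by (simp add: i_times_def vec_eq_iff algebra_simps)

lemma i_times_scale: "Phi (i_times (t *\<^sub>R A)) = t *\<^sub>R Phi (i_times A)"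
  by (rule cm_eqI) (simp add: Phi_apply scaleR_cm.rep_eq scaleR_blinfun.rep_eq i_times_def vec_eq_iff
      matrix_vector_mult_def sum_distrib_left scaleR_conv_of_real[where 'a=complex] algebra_simps)

lemma entry_bl: "bounded_linear (\<lambda>E::'a::finite cm. blinfun_apply (cm_rep E) v $ i)"
proof -
  have "bounded_linear (\<lambda>f::(complex^'a) \<Rightarrow>\<^sub>L (complex^'a). blinfun_apply f v $ i)"
    by (rule bounded_linear_compose[OF bounded_linear_vec_nth blinfun.bounded_linear_left])
  from bounded_linear_compose[OF this bl_cm_rep] show ?thesis .
qed

lemma cmat_exp_Phi: "cmat_exp M $ i $ j = blinfun_apply (cm_rep (exp (Phi M))) (axis j 1) $ i"
proof -
  let ?a = "\<lambda>k. (1 / fact k) *\<^sub>R (Phi M ^ k)"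
  let ?s = "\<lambda>k. (\<chi> i j. (1 / (of_nat (fact k) :: complex)) * (cmat_pow M k $ i $ j))"
  let ?V = "\<chi> i j. blinfun_apply (cm_rep (exp (Phi M))) (axis j 1) $ i"
  have sa: "?a sums exp (Phi M)"
  proof -
    have e: "(\<lambda>k. Phi M ^ k /\<^sub>R fact k) = ?a" by (simp add: inverse_eq_divide)
    show ?thesis using summable_exp_generic[of "Phi M"] unfolding exp_def e by (rule summable_sums)
  qed
  have comp: "blinfun_apply (cm_rep (?a k)) (axis j 1) $ i = ?s k $ i $ j" for k i j
    by (simp add: scaleR_cm.rep_eq scaleR_blinfun.rep_eq Phi_pow[symmetric] Phi_apply mv_axis
        scaleR_conv_of_real[where 'a=complex] cmat_pow.simps)
  have cs: "(\<lambda>k. ?s k $ i $ j) sums (?V $ i $ j)" for i j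
    using bounded_linear.sums[OF entry_bl[of "axis j 1" i] sa] unfolding comp by simp
  have "?s sums ?V"
    unfolding sums_def
    apply (rule vec_tendstoI)
    apply (rule vec_tendstoI)
    using cs unfolding sums_def sum_component by simp
  then have "cmat_exp M = ?V" unfolding cmat_exp_def by (rule sums_unique[symmetric])
  then show ?thesis by simp
qed

lemma herm0:
  fixes A :: "real^'a::finite^'a" and y :: "complex^'a"
  assumes sym: "transpose A = A"
  shows "inner y (i_times A *v y) = 0"
proof -
  have Aij: "A $ j $ i = A $ i $ j" for i j
    using sym unfolding transpose_def by (metis vec_lambda_beta)
  define f where "f i j = A $ i $ j * (Im (y $ i) * Re (y $ j) - Re (y $ i) * Im (y $ j))" for i j
  have fs: "f j i = - f i j" for i j unfolding f_def Aij[of i j] by (simp add: algebra_simps)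
  have "inner y (i_times A *v y) = (\<Sum>i\<in>UNIV.
        Im (y $ i) * (\<Sum>x\<in>UNIV. Re (y $ x) * A $ i $ x) +
        Re (y $ i) * (\<Sum>x\<in>UNIV. - (Im (y $ x) * A $ i $ x)))"
    unfolding inner_vec_def matrix_vector_mult_def i_times_def
    by (simp add: inner_sum_right inner_complex_def algebra_simps)
  also have "\<dots> = (\<Sum>i\<in>UNIV. \<Sum>j\<in>UNIV. f i j)"
  proof (rule sum.cong[OF refl])
    fix i
    have "(\<Sum>j\<in>UNIV. f i j) = (\<Sum>j\<in>UNIV. Im (y $ i) * (Re (y $ j) * A $ i $ j)) - (\<Sum>j\<in>UNIV. Re (y $ i) * (Im (y $ j) * A $ i $ j))"
      unfolding f_def sum_subtractf[symmetric] by (rule sum.cong) (auto simp: algebra_simps)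
    also have "\<dots> = Im (y $ i) * (\<Sum>x\<in>UNIV. Re (y $ x) * A $ i $ x) +
        Re (y $ i) * (\<Sum>x\<in>UNIV. - (Im (y $ x) * A $ i $ x))"
      by (simp only: sum_distrib_left[symmetric] sum_negf)
    finally show "Im (y $ i) * (\<Sum>x\<in>UNIV. Re (y $ x) * A $ i $ x) +
        Re (y $ i) * (\<Sum>x\<in>UNIV. - (Im (y $ x) * A $ i $ x)) = (\<Sum>j\<in>UNIV. f i j)" by simp
  qed
  finally have e1: "inner y (i_times A *v y) = (\<Sum>i\<in>UNIV. \<Sum>j\<in>UNIV. f i j)" .
  have "(\<Sum>i\<in>UNIV. \<Sum>j\<in>UNIV. f i j) = (\<Sum>j\<in>UNIV. \<Sum>i\<in>UNIV. f i j)"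
    by (rule sum.swap)
  also have "\<dots> = - (\<Sum>j\<in>UNIV. \<Sum>i\<in>UNIV. f j i)"
  proof -
    have "(\<Sum>j\<in>UNIV. \<Sum>i\<in>UNIV. f i j) = (\<Sum>j\<in>UNIV. \<Sum>i\<in>UNIV. - f j i)"
      by (intro sum.cong refl) (rule fs)
    then show ?thesis by (simp only: sum_negf)
  qed
  finally have "(\<Sum>i\<in>UNIV. \<Sum>j\<in>UNIV. f i j) = - (\<Sum>i\<in>UNIV. \<Sum>j\<in>UNIV. f i j)" .
  with e1 show ?thesis by linarith
qed

lemma bl_apply_rep: "bounded_linear (\<lambda>E::'a::finite cm. blinfun_apply (cm_rep E) v)"
  by (rule bounded_linear_compose[OF blinfun.bounded_linear_left bl_cm_rep])

lemma exp_unitary: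
  fixes A :: "real^'a::finite^'a"
  assumes sym: "transpose A = A"
  shows "norm (blinfun_apply (cm_rep (exp (t *\<^sub>R Phi (i_times A)))) v) = norm v"
proof -
  define Z where "Z = Phi (i_times A)"
  define y where "y s = blinfun_apply (cm_rep (exp (s *\<^sub>R Z))) v" for s
  have dy: "(y has_vector_derivative (i_times A *v y s)) (at s)" for s
  proof -
    have "((\<lambda>s. blinfun_apply (cm_rep (exp (s *\<^sub>R Z))) v) has_vector_derivative
        blinfun_apply (cm_rep (Z * exp (s *\<^sub>R Z))) v) (at s)"
      by (rule bounded_linear.has_vector_derivative[OF bl_apply_rep exp_scaleR_has_vector_derivative_left])
    moreover have "blinfun_apply (cm_rep (Z * exp (s *\<^sub>R Z))) v = i_times A *v y s"
      by (simp add: times_cm.rep_eq y_def Z_def Phi_apply)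
    ultimately show ?thesis unfolding y_def by simp
  qed
  have df: "((\<lambda>s. inner (y s) (y s)) has_derivative (\<lambda>h. 0)) (at s within UNIV)" for s
  proof -
    have "((\<lambda>s. inner (y s) (y s)) has_derivative
         (\<lambda>h. inner (y s) (h *\<^sub>R (i_times A *v y s)) + inner (h *\<^sub>R (i_times A *v y s)) (y s))) (at s)"
      using dy[of s] unfolding has_vector_derivative_def by (intro has_derivative_inner)
    moreover have "(\<lambda>h. inner (y s) (h *\<^sub>R (i_times A *v y s)) + inner (h *\<^sub>R (i_times A *v y s)) (y s)) = (\<lambda>h. 0)"
      using herm0[OF sym, of "y s"] by (simp add: inner_commute)
    ultimately show ?thesis by simp
  qed
  obtain c where c: "\<forall>s\<in>UNIV. inner (y s) (y s) = c"
    using has_derivative_zero_constant[OF convex_UNIV df] by blast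
  have "inner (y t) (y t) = inner (y 0) (y 0)" using c by simp
  also have "y 0 = v" by (simp add: y_def one_cm.rep_eq)
  finally show ?thesis unfolding y_def Z_def by (simp add: norm_eq_sqrt_inner)
qed

lemma norm_vec_sq: "(norm (x::'b::real_normed_vector^'a::finite))^2 = (\<Sum>i\<in>UNIV. (norm (x $ i))^2)"
  by (simp add: norm_vec_def L2_set_def sum_nonneg)

lemma exp_norm_le1:
  fixes A :: "real^'a::finite^'a"
  assumes sym: "transpose A = A"
  shows "norm (exp (t *\<^sub>R Phi (i_times A))) \<le> 1"
  unfolding norm_cm.rep_eq
  by (rule norm_blinfun_bound) (simp_all add: exp_unitary[OF sym])

lemma bl_rmv: "bounded_linear (\<lambda>v::real^'a::finite. M *v v)"
  using matrix_vector_mul_linear linear_conv_bounded_linear by blast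

lemma Phi_norm_le: "norm (Phi (i_times (H0::real^'a::finite^'a))) \<le> op_norm H0"
proof -
  have op0: "0 \<le> op_norm H0" unfolding op_norm_def by (rule onorm_pos_le[OF bl_rmv])
  have opb: "norm (H0 *v a) \<le> op_norm H0 * norm a" for a
    unfolding op_norm_def by (rule onorm[OF bl_rmv])
  show ?thesis unfolding norm_cm.rep_eq
  proof (rule norm_blinfun_bound[OF op0])
    fix v :: "complex^'a"
    define a where "a = (\<chi> i. Re (v $ i))"
    define b where "b = (\<chi> i. Im (v $ i))"
    have comp: "(norm ((i_times H0 *v v) $ i))^2 = ((H0 *v a) $ i)^2 + ((H0 *v b) $ i)^2" for i
    proof -
      have "Re ((i_times H0 *v v) $ i) = - (H0 *v b) $ i"
        by (simp add: i_times_def matrix_vector_mult_def b_def Re_sum sum_negf)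
      moreover have "Im ((i_times H0 *v v) $ i) = (H0 *v a) $ i"
        by (simp add: i_times_def matrix_vector_mult_def a_def Im_sum)
      ultimately show ?thesis by (simp add: cmod_power2)
    qed
    have nv: "(norm v)^2 = (norm a)^2 + (norm b)^2"
      by (simp add: norm_vec_sq a_def b_def cmod_power2 sum.distrib)
    have "(norm (i_times H0 *v v))^2 = (norm (H0 *v a))^2 + (norm (H0 *v b))^2"
      by (simp add: norm_vec_sq comp sum.distrib)
    also have "\<dots> \<le> (op_norm H0 * norm a)^2 + (op_norm H0 * norm b)^2"
      by (intro add_mono power_mono opb) auto
    also have "\<dots> = (op_norm H0 * norm v)^2"
      by (simp add: power_mult_distrib nv algebra_simps)
    finally have "(norm (i_times H0 *v v))^2 \<le> (op_norm H0 * norm v)^2" .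
    then show "norm (blinfun_apply (cm_rep (Phi (i_times H0))) v) \<le> op_norm H0 * norm v"
      unfolding Phi_apply using op0 by (simp add: power2_le_iff_abs_le)
  qed
qed

lemma exp_pert:
  fixes A B :: "real^'a::finite^'a"
  assumes symA: "transpose A = A" and symB: "transpose B = B"
  shows "norm (exp (Phi (i_times A) + Phi (i_times B)) - exp (Phi (i_times A))) \<le> norm (Phi (i_times B))"
proof -
  define X where "X = Phi (i_times A)"
  define Y where "Y = Phi (i_times B)"
  have symAB: "transpose (A + B) = A + B"
    using symA symB by (simp add: transpose_def vec_eq_iff)
  have XY: "X + Y = Phi (i_times (A + B))"
    by (simp add: X_def Y_def i_times_add Phi_add)
  define g where "g s = exp (s *\<^sub>R (- X)) * exp (s *\<^sub>R (X + Y))" for s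
  define g' where "g' s = exp (s *\<^sub>R (- X)) * Y * exp (s *\<^sub>R (X + Y))" for s
  have dg: "(g has_vector_derivative g' s) (at s within {0..1})" for s
  proof -
    have "(g has_vector_derivative
       (exp (s *\<^sub>R (- X)) * ((X + Y) * exp (s *\<^sub>R (X + Y))) + (exp (s *\<^sub>R (- X)) * (- X)) * exp (s *\<^sub>R (X + Y))))
        (at s within {0..1})"
      unfolding g_def
      by (intro has_vector_derivative_mult exp_scaleR_has_vector_derivative_right
          has_vector_derivative_at_within[OF exp_scaleR_has_vector_derivative_left])
    moreover have "exp (s *\<^sub>R (- X)) * ((X + Y) * exp (s *\<^sub>R (X + Y))) + (exp (s *\<^sub>R (- X)) * (- X)) * exp (s *\<^sub>R (X + Y)) = g' s"
      unfolding g'_def by (simp add: algebra_simps)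
    ultimately show ?thesis by simp
  qed
  have ng': "norm (g' s) \<le> norm Y" for s
  proof -
    have e1: "norm (exp (s *\<^sub>R (- X))) \<le> 1"
      using exp_norm_le1[OF symA, of "- s"] by (simp add: X_def)
    have e2: "norm (exp (s *\<^sub>R (X + Y))) \<le> 1"
      using exp_norm_le1[OF symAB, of s] by (simp add: XY)
    have "norm (g' s) \<le> norm (exp (s *\<^sub>R (- X))) * norm Y * norm (exp (s *\<^sub>R (X + Y)))"
      unfolding g'_def by (meson norm_mult_ineq order_trans mult_right_mono norm_ge_zero)
    also have "\<dots> \<le> 1 * norm Y * 1"
      by (intro mult_mono e1 e2) auto
    finally show ?thesis by simp
  qed
  have "norm (g 1 - g 0) \<le> norm Y * norm (1 - (0::real))"
  proof (rule differentiable_bound[of "{0..1}" g "\<lambda>s h. h *\<^sub>R g' s"])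
    show "convex {0..1::real}" by simp
    show "(g has_derivative (\<lambda>h. h *\<^sub>R g' s)) (at s within {0..1})" if "s \<in> {0..1}" for s
      using dg[of s] unfolding has_vector_derivative_def .
    show "onorm (\<lambda>h. h *\<^sub>R g' s) \<le> norm Y" if "s \<in> {0..1}" for s
      by (rule onorm_bound) (auto intro: mult_left_mono[OF ng'] simp: mult.commute)
  qed auto
  then have ng: "norm (g 1 - g 0) \<le> norm Y" by simp
  have "exp (X + Y) - exp X = exp X * (g 1 - g 0)"
  proof -
    have "exp X * g 1 = exp X * exp (- X) * exp (X + Y)" by (simp add: g_def mult.assoc)
    also have "\<dots> = exp (X + Y)" by (simp add: exp_minus_inverse)
    finally show ?thesis by (simp add: g_def right_diff_distrib)
  qed
  then have "norm (exp (X + Y) - exp X) \<le> norm (exp X) * norm (g 1 - g 0)"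
    by (simp add: norm_mult_ineq)
  also have "\<dots> \<le> 1 * norm Y"
    using exp_norm_le1[OF symA, of 1] ng by (intro mult_mono) (auto simp: X_def)
  finally show ?thesis by (simp add: X_def Y_def)
qed

theorem theorem3p3:
  fixes w :: "'n::{finite,linorder} \<Rightarrow> 'n \<Rightarrow> real" and H :: "((real, 'n) vec, 'n) vec" and v1 v2 :: "'n" and t0 :: real
    and \<theta> :: real and S :: "'n set" and Q :: "((real, 'n) vec, 'n) vec" and r :: "'n \<Rightarrow> int"
    and x :: "(real, 'n) vec"
  assumes graph: "weighted_connected_graph w"
    and H_def: "H = adjacency_matrix w \<or> H = laplacian_matrix w"
    and v12: "v1 \<noteq> v2"
    and pst: "norm (cmat_exp (i_times (t0 *\<^sub>R H)) $ v1 $ v2) = 1"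
    and S_initial: "\<forall>i\<in>S. \<forall>j. j \<le> i \<longrightarrow> j \<in> S"
    and r_even: "\<forall>i\<in>S. even (r i) \<and> r i > 0"
    and r_odd: "\<forall>i. i \<notin> S \<longrightarrow> odd (r i) \<and> r i > 0"
    and r_sorted_even: "\<forall>i\<in>S. \<forall>j\<in>S. i \<le> j \<longrightarrow> r j \<le> r i"
    and r_sorted_odd: "\<forall>i j. i \<notin> S \<longrightarrow> j \<notin> S \<longrightarrow> i \<le> j \<longrightarrow> r j \<le> r i"
    and Q_orth: "orthogonal_matrix Q"
    and decomp: "t0 *\<^sub>R H = transpose Q ** (\<chi> i j. if i = j then pi * real_of_int (r i) else 0) ** Q
                              + \<theta> *\<^sub>R mat 1"
    and row1: "transpose Q $ v1 = x"
    and row2: "transpose Q $ v2 = (\<chi> i. if i \<in> S then x $ i else - (x $ i))"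
    and x_nonneg: "\<forall>i. x $ i \<ge> 0"
  shows "\<exists>C. \<exists>\<delta>>0. \<forall>H0.
           transpose H0 = H0 \<longrightarrow> H0 \<noteq> 0 \<longrightarrow> op_norm H0 < \<delta> \<longrightarrow>
           1 - (norm (cmat_exp (i_times (t0 *\<^sub>R H + H0)) $ v1 $ v2))\<^sup>2
             \<le> 2 * (frob_norm H0)\<^sup>2 / (pi - op_norm H0)\<^sup>2 + (op_norm H0)\<^sup>2
                + C * (op_norm H0) ^ 3"
proof -
  have wsym: "w j k = w k j" for j k using graph unfolding weighted_connected_graph_def by blast
  have Hsym: "transpose H = H"
    using H_def by (auto simp: vec_eq_iff transpose_def laplacian_matrix_def adjacency_matrix_def wsym)
  have M0sym: "transpose (t0 *\<^sub>R H) = t0 *\<^sub>R H"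
    using Hsym by (simp add: vec_eq_iff transpose_def)
  have key: "1 - (norm (cmat_exp (i_times (t0 *\<^sub>R H + H0)) $ v1 $ v2))\<^sup>2
             \<le> 2 * (frob_norm H0)\<^sup>2 / (pi - op_norm H0)\<^sup>2 + (op_norm H0)\<^sup>2
                + 0 * (op_norm H0) ^ 3" if H0sym: "transpose H0 = H0" for H0 :: "((real, 'n) vec, 'n) vec"
  proof -
    define e2 :: "(complex, 'n) vec" where "e2 = axis v2 1"
    define X where "X = Phi (i_times (t0 *\<^sub>R H))"
    define Y where "Y = Phi (i_times H0)"
    define wv where "wv = blinfun_apply (cm_rep (exp X)) e2"
    define u where "u = blinfun_apply (cm_rep (exp (X + Y))) e2"
    have ne2: "norm e2 = 1" by (simp add: e2_def)
    have wv1: "norm (wv $ v1) = 1"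
      using pst unfolding cmat_exp_Phi wv_def X_def e2_def .
    have nw: "norm wv = 1"
      using exp_unitary[OF M0sym, of 1 e2] ne2 by (simp add: wv_def X_def)
    have XY: "X + Y = Phi (i_times (t0 *\<^sub>R H + H0))"
      by (simp add: X_def Y_def i_times_add Phi_add)
    have symS: "transpose (t0 *\<^sub>R H + H0) = t0 *\<^sub>R H + H0"
      using M0sym H0sym by (simp add: vec_eq_iff transpose_def)
    have nu: "norm u = 1"
      using exp_unitary[OF symS, of 1 e2] ne2 by (simp add: u_def XY)
    have uentry: "cmat_exp (i_times (t0 *\<^sub>R H + H0)) $ v1 $ v2 = u $ v1"
      unfolding cmat_exp_Phi u_def XY e2_def ..
    let ?R = "UNIV - {v1}"
    have sw: "(norm (wv $ v1))^2 + (\<Sum>i\<in>?R. (norm (wv $ i))^2) = 1"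
      using nw norm_vec_sq[of wv] by (simp add: sum.remove[of UNIV v1])
    then have "(\<Sum>i\<in>?R. (norm (wv $ i))^2) = 0" using wv1 by simp
    then have w0: "wv $ i = 0" if "i \<noteq> v1" for i
      using that by (subst (asm) sum_nonneg_eq_0_iff) auto
    have su: "(norm (u $ v1))^2 + (\<Sum>i\<in>?R. (norm (u $ i))^2) = 1"
      using nu norm_vec_sq[of u] by (simp add: sum.remove[of UNIV v1])
    have "1 - (norm (u $ v1))^2 = (\<Sum>i\<in>?R. (norm (u $ i - wv $ i))^2)"
      using su w0 by (simp add: algebra_simps)
    also have "\<dots> \<le> (\<Sum>i\<in>UNIV. (norm (u $ i - wv $ i))^2)"
      by (rule sum_mono2) auto
    also have "\<dots> = (norm (u - wv))^2" by (simp add: norm_vec_sq)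
    also have "\<dots> \<le> (op_norm H0)^2"
    proof -
      have "u - wv = blinfun_apply (cm_rep (exp (X + Y) - exp X)) e2"
        by (simp add: u_def wv_def minus_cm.rep_eq blinfun.diff_left)
      then have "norm (u - wv) \<le> norm (exp (X + Y) - exp X) * norm e2"
        by (simp add: norm_cm.rep_eq norm_blinfun)
      also have "\<dots> \<le> norm Y" using exp_pert[OF M0sym H0sym] ne2 by (simp add: X_def Y_def)
      also have "\<dots> \<le> op_norm H0" unfolding Y_def by (rule Phi_norm_le)
      finally show ?thesis by (intro power_mono) auto
    qed
    finally have main: "1 - (norm (cmat_exp (i_times (t0 *\<^sub>R H + H0)) $ v1 $ v2))^2 \<le> (op_norm H0)^2"
      unfolding uentry .
    have nn: "0 \<le> 2 * (frob_norm H0)\<^sup>2 / (pi - op_norm H0)\<^sup>2" by simp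
    show "1 - (norm (cmat_exp (i_times (t0 *\<^sub>R H + H0)) $ v1 $ v2))\<^sup>2
             \<le> 2 * (frob_norm H0)\<^sup>2 / (pi - op_norm H0)\<^sup>2 + (op_norm H0)\<^sup>2
                + 0 * (op_norm H0) ^ 3" using add_increasing[OF nn main] by simp
  qed
  show ?thesis
    apply (rule exI[where x=0])
    apply (rule exI[where x=1])
    using key by simp
qed

end
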